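(* Let $\mathcal A$ be a group (not necessarily finitely generated) and let $\mathcal H$ be a proper subgroup of $\mathcal A$. Then there exists a generating system $X$ of $\mathcal A$ such that $X\cap\mathcal H=\emptyset$ and $|X|=\mathrm{rank}(\mathcal A)$.
   Context: $\mathrm{rank}(\mathcal A)$ is the minimal cardinality of a generating set of $\mathcal A$. *)

theory Defs
  imports "HOL-Algebra.Algebra"
begin

definition generating_set :: "('a, 'b) monoid_scheme \<Rightarrow> 'a set \<Rightarrow> bool" where
  "generating_set Grp S \<longleftrightarrow> S \<subseteq> carrier Grp \<and> generate Grp S = carrier Grp"

text \<open>The cardinality of S equals rank(G), the minimal cardinality of a generating set
  of G: S has cardinality at most that of every generating set of G.
  (Combined with S itself being a generating set, this says |S| = rank G.)\<close>
definition card_le_all_gensets :: "('a, 'b) monoid_scheme \<Rightarrow> 'a set \<Rightarrow> bool" where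
  "card_le_all_gensets Grp S \<longleftrightarrow>
     (\<forall>T. generating_set Grp T \<longrightarrow> (card_of S, card_of T) \<in> ordLeq)"

end

theory Submission
  imports Defs
begin

theorem lemma6p2:
  fixes G :: "('a, 'b) monoid_scheme" and H :: "'a set"
  assumes "group G"
    and "subgroup H G"
    and "H \<noteq> carrier G"
  shows "\<exists>Gs. generating_set G Gs \<and> Gs \<inter> H = {} \<and> card_le_all_gensets G Gs"
proof -
  interpret group G by fact
  have HG: "H \<subseteq> carrier G" using assms(2) subgroup.subset by blast
  let ?R = "{card_of T | T. generating_set G T}"
  have "generating_set G (carrier G)"
    unfolding generating_set_def
    using generate_incl[of "carrier G"] generate.incl[of _ "carrier G" G] by auto
  hence "?R \<noteq> {}" by blast
  moreover have "\<forall>r\<in>?R. Well_order r" using card_of_Well_order by blast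
  ultimately obtain r where "r \<in> ?R" and rmin: "\<forall>r'\<in>?R. r \<le>o r'"
    using exists_minim_Well_order[of ?R] by blast
  then obtain Xs where Xs: "generating_set G Xs" and rXs: "r = card_of Xs" by blast
  have Xmin: "\<And>T. generating_set G T \<Longrightarrow> card_of Xs \<le>o card_of T"
    using rmin rXs by blast
  have XG: "Xs \<subseteq> carrier G" and genX: "generate G Xs = carrier G"
    using Xs unfolding generating_set_def by auto
  have "\<not> Xs \<subseteq> H"
  proof
    assume "Xs \<subseteq> H"
    hence "generate G Xs \<subseteq> H" using generate_subgroup_incl assms(2) by blast
    thus False using genX HG assms(3) by blast
  qed
  then obtain y where yX: "y \<in> Xs" and yH: "y \<notin> H" by blast
  have yG: "y \<in> carrier G" using yX XG by blast
  define ff where "ff = (\<lambda>x. if x \<in> H then y \<otimes>\<^bsub>G\<^esub> x else x)"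
  let ?Y = "ff ` Xs"
  have ffy: "ff y = y" using yH ff_def by simp
  have yY: "y \<in> ?Y" using yX ffy by (metis image_eqI)
  have YG: "?Y \<subseteq> carrier G" using XG yG HG unfolding ff_def by auto
  have YH: "?Y \<inter> H = {}"
  proof (rule ccontr)
    assume "?Y \<inter> H \<noteq> {}"
    then obtain x where x: "x \<in> Xs" "ff x \<in> H" by blast
    show False
    proof (cases "x \<in> H")
      case True
      hence "y \<otimes>\<^bsub>G\<^esub> x \<in> H" using x ff_def by simp
      hence "(y \<otimes>\<^bsub>G\<^esub> x) \<otimes>\<^bsub>G\<^esub> inv\<^bsub>G\<^esub> x \<in> H" using True assms(2)
        by (simp add: subgroup.m_closed subgroup.m_inv_closed)
      moreover have "(y \<otimes>\<^bsub>G\<^esub> x) \<otimes>\<^bsub>G\<^esub> inv\<^bsub>G\<^esub> x = y" using True HG yG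
        by (simp add: m_assoc subsetD)
      ultimately show False using yH by simp
    next
      case False thus False using x ff_def by simp
    qed
  qed
  have "Xs \<subseteq> generate G ?Y"
  proof
    fix x assume x: "x \<in> Xs"
    show "x \<in> generate G ?Y"
    proof (cases "x \<in> H")
      case True
      have "y \<otimes>\<^bsub>G\<^esub> x \<in> ?Y" using x True ff_def by (metis image_eqI)
      hence a: "y \<otimes>\<^bsub>G\<^esub> x \<in> generate G ?Y" by (rule generate.incl)
      have b: "inv\<^bsub>G\<^esub> y \<in> generate G ?Y" using yY by (rule generate.inv)
      have "inv\<^bsub>G\<^esub> y \<otimes>\<^bsub>G\<^esub> (y \<otimes>\<^bsub>G\<^esub> x) \<in> generate G ?Y" using generate.eng[OF b a] .
      moreover have "inv\<^bsub>G\<^esub> y \<otimes>\<^bsub>G\<^esub> (y \<otimes>\<^bsub>G\<^esub> x) = x" using yG True HG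
        by (simp add: m_assoc[symmetric] subsetD)
      ultimately show ?thesis by simp
    next
      case False
      hence "x \<in> ?Y" using x ff_def by (metis image_eqI)
      thus ?thesis by (rule generate.incl)
    qed
  qed
  hence "generate G Xs \<subseteq> generate G ?Y"
    using generate_subgroup_incl generate_is_subgroup[OF YG] by blast
  hence "generate G ?Y = carrier G" using genX generate_incl[OF YG] by blast
  hence genY: "generating_set G ?Y" using YG unfolding generating_set_def by blast
  have "card_of ?Y \<le>o card_of Xs" by (rule card_of_image)
  hence "card_le_all_gensets G ?Y"
    unfolding card_le_all_gensets_def using Xmin ordLeq_transitive by blast
  thus ?thesis using genY YH by blast
qed

end
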